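(* Let $p_0, p_1, \dots, p_k$ with $k \leq 2d$ be the vertices visited on the path in the near neighbor graph during a single tour of the query algorithm. Then with overwhelming probability over the randomness of the data set, $$\sum_{i=0}^k |\mathcal{B}(p_i)| = O(d\, n\, C(\alpha)).$$
   Context: $\mathcal{S}^{d-1}$ is the Euclidean unit sphere in $\mathbb{R}^d$; $C(\alpha)=\Pr_{X\sim\mathcal{U}(\mathcal{S}^{d-1})}(X_1>\alpha)$; $\alpha\in(0,1)$ with $nC(\alpha)\gg1$. The data set $\mathcal{D}$ consists of $n$ points independently uniform on $\mathcal{S}^{d-1}$; the $\alpha$-near neighbor graph has vertex set $\mathcal{D}$ and an edge between $p,p'$ iff $\langle p,p'\rangle\ge\alpha$, with neighbor sets $\mathcal{B}(p)$. A tour of the query algorithm for a query $q$: start at a uniformly random vertex $p_0$, and repeatedly move from the current vertex $p$ to some $p'\in\mathcal{B}(p)$ with $\langle p',q\rangle\ge\langle p,q\rangle+\frac1d$, until no such $p'$ exists or the target is reached. *)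

theory Defs
  imports "HOL-Probability.Probability"
begin

text \<open>Points of R^d are represented as functions nat => real, extensional on {..<d}.\<close>

definition ip :: "nat \<Rightarrow> (nat \<Rightarrow> real) \<Rightarrow> (nat \<Rightarrow> real) \<Rightarrow> real" where
  "ip d x y = (\<Sum>i<d. x i * y i)"

definition vnorm :: "nat \<Rightarrow> (nat \<Rightarrow> real) \<Rightarrow> real" where
  "vnorm d x = sqrt (ip d x x)"

definition unit_sphere :: "nat \<Rightarrow> (nat \<Rightarrow> real) set" where
  "unit_sphere d = {x \<in> PiE {..<d} (\<lambda>_. UNIV). vnorm d x = 1}"

definition unit_ball :: "nat \<Rightarrow> (nat \<Rightarrow> real) set" where
  "unit_ball d = {x \<in> PiE {..<d} (\<lambda>_. UNIV). vnorm d x \<le> 1}"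

definition radial :: "nat \<Rightarrow> (nat \<Rightarrow> real) \<Rightarrow> (nat \<Rightarrow> real)" where
  "radial d x = restrict (\<lambda>i. x i / vnorm d x) {..<d}"

text \<open>Uniform (normalized surface) measure on the unit sphere S^(d-1), defined as the
  cone measure: the image of the uniform distribution on the unit ball under radial projection.\<close>
definition unif_sphere :: "nat \<Rightarrow> (nat \<Rightarrow> real) measure" where
  "unif_sphere d = distr (uniform_measure (PiM {..<d} (\<lambda>_. lborel)) (unit_ball d))
                         (PiM {..<d} (\<lambda>_. borel)) (radial d)"

text \<open>C(alpha) = Pr_{X ~ U(S^(d-1))} (X_1 > alpha); coordinate 1 is index 0 here.\<close>
definition cap :: "nat \<Rightarrow> real \<Rightarrow> real" where
  "cap d \<alpha> = measure (unif_sphere d) {x \<in> space (unif_sphere d). x 0 > \<alpha>}"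

definition data_measure :: "nat \<Rightarrow> nat \<Rightarrow> (nat \<Rightarrow> nat \<Rightarrow> real) measure" where
  "data_measure d n = PiM {..<n} (\<lambda>_. unif_sphere d)"

definition nbrs :: "nat \<Rightarrow> nat \<Rightarrow> real \<Rightarrow> (nat \<Rightarrow> nat \<Rightarrow> real) \<Rightarrow> nat \<Rightarrow> nat set" where
  "nbrs d n \<alpha> D i = {j. j < n \<and> j \<noteq> i \<and> ip d (D i) (D j) \<ge> \<alpha>}"

definition tour_path :: "nat \<Rightarrow> nat \<Rightarrow> real \<Rightarrow> (nat \<Rightarrow> nat \<Rightarrow> real) \<Rightarrow> (nat \<Rightarrow> real) \<Rightarrow> nat list \<Rightarrow> bool" where
  "tour_path d n \<alpha> D q ps \<longleftrightarrow> ps \<noteq> [] \<and> (\<forall>p\<in>set ps. p < n) \<and>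
     (\<forall>i. i + 1 < length ps \<longrightarrow>
        ps ! (i+1) \<in> nbrs d n \<alpha> D (ps ! i) \<and>
        ip d (D (ps ! (i+1))) q \<ge> ip d (D (ps ! i)) q + 1 / real d)"

end

theory Submission
  imports Defs
begin


abbreviation LL :: "nat \<Rightarrow> (nat \<Rightarrow> real) measure" where
  "LL d \<equiv> PiM {..<d} (\<lambda>_. lborel)"

definition mp :: "nat \<Rightarrow> ((nat \<Rightarrow> real) \<Rightarrow> (nat \<Rightarrow> real)) \<Rightarrow> bool" where
  "mp d T \<longleftrightarrow> T \<in> measurable (LL d) (LL d) \<and>
     (\<forall>f \<in> borel_measurable (LL d). (\<integral>\<^sup>+x. f (T x) \<partial>LL d) = (\<integral>\<^sup>+x. f x \<partial>LL d))"

lemma mp_comp: "mp d T \<Longrightarrow> mp d S \<Longrightarrow> mp d (T \<circ> S)"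
  unfolding mp_def
proof (intro conjI ballI)
  assume T: "T \<in> LL d \<rightarrow>\<^sub>M LL d \<and> (\<forall>f\<in>borel_measurable (LL d). (\<integral>\<^sup>+ x. f (T x) \<partial>LL d) = integral\<^sup>N (LL d) f)"
    and S: "S \<in> LL d \<rightarrow>\<^sub>M LL d \<and> (\<forall>f\<in>borel_measurable (LL d). (\<integral>\<^sup>+ x. f (S x) \<partial>LL d) = integral\<^sup>N (LL d) f)"
  show "T \<circ> S \<in> LL d \<rightarrow>\<^sub>M LL d" using T S by (auto intro: measurable_comp)
  fix f :: "_ \<Rightarrow> ennreal" assume f: "f \<in> borel_measurable (LL d)"
  have "(\<lambda>x. f (T x)) \<in> borel_measurable (LL d)" using T f by (auto intro: measurable_comp[unfolded comp_def])
  then have "(\<integral>\<^sup>+ x. f (T (S x)) \<partial>LL d) = (\<integral>\<^sup>+ x. f (T x) \<partial>LL d)" using S by auto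
  also have "\<dots> = integral\<^sup>N (LL d) f" using T f by auto
  finally show "(\<integral>\<^sup>+ x. f ((T \<circ> S) x) \<partial>LL d) = integral\<^sup>N (LL d) f" by simp
qed

definition shear :: "nat \<Rightarrow> nat \<Rightarrow> real \<Rightarrow> (nat \<Rightarrow> real) \<Rightarrow> (nat \<Rightarrow> real)" where
  "shear a b u x = x(a := x a + u * x b)"

lemma shear_meas:
  assumes "a < d" "b < d"
  shows "shear a b u \<in> measurable (LL d) (LL d)"
proof -
  have "(\<lambda>x i. if i = a then x a + u * x b else x i) \<in> measurable (LL d) (LL d)"
  proof (rule measurable_PiM_single')
    fix i assume i: "i \<in> {..<d}"
    have [measurable]: "(\<lambda>x. x a) \<in> borel_measurable (LL d)" "(\<lambda>x. x b) \<in> borel_measurable (LL d)"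
      "(\<lambda>x. x i) \<in> borel_measurable (LL d)"
      using assms i measurable_component_singleton[of _ "{..<d}" "\<lambda>_. lborel::real measure"] by auto
    show "(\<lambda>x. if i = a then x a + u * x b else x i) \<in> measurable (LL d) lborel"
      unfolding measurable_lborel1 by (cases "i = a") simp_all
  next
    show "(\<lambda>x i. if i = a then x a + u * x b else x i) \<in> space (LL d) \<rightarrow> (\<Pi>\<^sub>E i\<in>{..<d}. space lborel)"
      using assms by (auto simp: space_PiM PiE_def extensional_def)
  qed
  moreover have "(\<lambda>x i. if i = a then x a + u * x b else x i) = shear a b u"
    by (auto simp: shear_def fun_eq_iff)
  ultimately show ?thesis by simp
qed

lemma shear_mp:
  assumes ab: "a < d" "b < d" "a \<noteq> b"
  shows "mp d (shear a b u)"
  unfolding mp_def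
proof (intro conjI ballI)
  show "shear a b u \<in> LL d \<rightarrow>\<^sub>M LL d" using shear_meas ab by auto
  fix f :: "_ \<Rightarrow> ennreal" assume f[measurable]: "f \<in> borel_measurable (LL d)"
  interpret P: product_sigma_finite "\<lambda>_. lborel :: real measure" by standard
  define I where "I = {..<d} - {a}"
  have ins: "{..<d} = insert a I" "a \<notin> I" "finite I" using ab by (auto simp: I_def)
  have fs: "(\<lambda>x. f (shear a b u x)) \<in> borel_measurable (LL d)"
    using shear_meas[OF ab(1,2)] f by (auto intro: measurable_comp[unfolded comp_def])
  have "(\<integral>\<^sup>+x. f (shear a b u x) \<partial>LL d) =
        (\<integral>\<^sup>+ x. (\<integral>\<^sup>+ y. f (shear a b u (x(a := y))) \<partial>lborel) \<partial>(PiM I (\<lambda>_. lborel::real measure)))"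
    using P.product_nn_integral_insert[OF ins(3,2), of "\<lambda>x. f (shear a b u x)"] fs ins(1) by simp
  also have "\<dots> = (\<integral>\<^sup>+ x. (\<integral>\<^sup>+ y. f (x(a := y)) \<partial>lborel) \<partial>(PiM I (\<lambda>_. lborel::real measure)))"
  proof (rule nn_integral_cong)
    fix x assume x: "x \<in> space (PiM I (\<lambda>_. lborel::real measure))"
    have g: "(\<lambda>y. f (x(a := y))) \<in> borel_measurable lborel"
      using measurable_comp[OF measurable_component_update f[unfolded ins(1)], OF x ins(2)]
      unfolding comp_def by simp
    have e: "\<And>y. shear a b u (x(a := y)) = x(a := u * x b + 1 * y)"
      using ab by (auto simp: shear_def fun_eq_iff)
    show "(\<integral>\<^sup>+ y. f (shear a b u (x(a := y))) \<partial>lborel) = (\<integral>\<^sup>+ y. f (x(a := y)) \<partial>lborel)"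
      unfolding e using nn_integral_real_affine[OF g[unfolded measurable_lborel2], of 1 "u * x b"] by simp
  qed
  also have "\<dots> = (\<integral>\<^sup>+x. f x \<partial>LL d)"
    using P.product_nn_integral_insert[OF ins(3,2), of f] f ins(1) by simp
  finally show "(\<integral>\<^sup>+x. f (shear a b u x) \<partial>LL d) = (\<integral>\<^sup>+x. f x \<partial>LL d)" .
qed

definition rot :: "nat \<Rightarrow> nat \<Rightarrow> real \<Rightarrow> real \<Rightarrow> (nat \<Rightarrow> real) \<Rightarrow> (nat \<Rightarrow> real)" where
  "rot a b c s x = x(a := c * x a + s * x b, b := - s * x a + c * x b)"

lemma rot_shear:
  assumes "a \<noteq> b" "s \<noteq> 0" "c^2 + s^2 = 1"
  shows "rot a b c s = shear a b ((1-c)/s) \<circ> shear b a (-s) \<circ> shear a b ((1-c)/s)"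
proof -
  define u where "u = (1-c)/s"
  have us: "u * s = 1 - c" using assms by (simp add: u_def)
  have "u * (1 + c) * s = (u * s) * (1 + c)" by (simp add: algebra_simps)
  also have "\<dots> = (1 - c) * (1 + c)" by (simp only: us)
  also have "\<dots> = 1 - c^2" by (simp add: algebra_simps power2_eq_square)
  also have "\<dots> = s * s" using assms by (simp add: power2_eq_square)
  finally have "u * (1 + c) * s = s * s" .
  then have uc: "u * (1 + c) = s" using assms by simp
  have A: "(x a + u * x b) + u * (x b + (-s) * (x a + u * x b)) = c * x a + s * x b" for x :: "nat \<Rightarrow> real"
  proof -
    have "(x a + u * x b) + u * (x b + (-s) * (x a + u * x b)) = x a * (1 - u * s) + x b * (u * (2 - u * s))"
      by (simp add: algebra_simps)
    also have "\<dots> = c * x a + s * x b"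
    proof -
      have h1: "1 - u * s = c" using us by simp
      have h2: "2 - u * s = 1 + c" using us by simp
      show ?thesis unfolding h1 h2 uc by simp
    qed
    finally show ?thesis .
  qed
  have B: "x b + (-s) * (x a + u * x b) = - s * x a + c * x b" for x :: "nat \<Rightarrow> real"
  proof -
    have "x b + (-s) * (x a + u * x b) = - s * x a + (1 - u * s) * x b" by (simp add: algebra_simps)
    moreover have "1 - u * s = c" using us by simp
    ultimately show ?thesis by simp
  qed
  show ?thesis unfolding u_def[symmetric]
  proof (intro ext)
    fix x i
    show "rot a b c s x i = (shear a b u \<circ> shear b a (-s) \<circ> shear a b u) x i"
      using assms A[of x] B[of x] by (auto simp: rot_def shear_def)
  qed
qed

lemma rot_mp:
  assumes "a < d" "b < d" "a \<noteq> b" "s \<noteq> 0" "c^2 + s^2 = 1"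
  shows "mp d (rot a b c s)"
  unfolding rot_shear[OF assms(3-5)] using assms
  by (intro mp_comp shear_mp) auto

definition ipp :: "nat \<Rightarrow> ((nat \<Rightarrow> real) \<Rightarrow> (nat \<Rightarrow> real)) \<Rightarrow> bool" where
  "ipp d T \<longleftrightarrow> (\<forall>x y. ip d (T x) (T y) = ip d x y)"

lemma ipp_comp: "ipp d T \<Longrightarrow> ipp d S \<Longrightarrow> ipp d (T \<circ> S)"
  by (simp add: ipp_def)

lemma sum_two:
  fixes d :: nat and f :: "nat \<Rightarrow> real"
  assumes "a < d" "b < d" "a \<noteq> b"
  shows "(\<Sum>i<d. f i) = f a + f b + (\<Sum>i\<in>{..<d} - {a, b}. f i)"
proof -
  have "(\<Sum>i<d. f i) = f a + (\<Sum>i\<in>{..<d} - {a}. f i)"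
    using assms by (intro sum.remove) simp_all
  also have "(\<Sum>i\<in>{..<d} - {a}. f i) = f b + (\<Sum>i\<in>{..<d} - {a} - {b}. f i)"
    using assms by (subst sum.remove[of _ b]) auto
  finally show ?thesis by (simp add: Diff_insert2[symmetric] insert_commute)
qed

lemma rot_ipp:
  assumes "a < d" "b < d" "a \<noteq> b" "c^2 + s^2 = 1"
  shows "ipp d (rot a b c s)"
  unfolding ipp_def
proof (intro allI)
  fix x y
  have r: "(\<Sum>i\<in>{..<d} - {a, b}. rot a b c s x i * rot a b c s y i) = (\<Sum>i\<in>{..<d} - {a, b}. x i * y i)"
    by (rule sum.cong) (auto simp: rot_def)
  have "(c * x a + s * x b) * (c * y a + s * y b) + (- s * x a + c * x b) * (- s * y a + c * y b)
     = (c^2 + s^2) * (x a * y a) + (c^2 + s^2) * (x b * y b)"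
    by (simp add: algebra_simps power2_eq_square)
  then have "(c * x a + s * x b) * (c * y a + s * y b) + (- s * x a + c * x b) * (- s * y a + c * y b)
     = x a * y a + x b * y b" using assms by simp
  then show "ip d (rot a b c s x) (rot a b c s y) = ip d x y"
    unfolding ip_def sum_two[OF assms(1-3), of "\<lambda>i. rot a b c s x i * rot a b c s y i"]
      sum_two[OF assms(1-3), of "\<lambda>i. x i * y i"] r
    using assms by (simp add: rot_def)
qed

lemma mp_id: "mp d id"
  unfolding mp_def by simp

lemma ipp_id: "ipp d id"
  unfolding ipp_def by simp

lemma sum_single0:
  fixes g :: "nat \<Rightarrow> real"
  assumes "0 < d" "\<And>i. 0 < i \<Longrightarrow> i < d \<Longrightarrow> g i = 0"
  shows "(\<Sum>i<d. g i) = g 0"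
proof -
  have "(\<Sum>i<d. g i) = g 0 + (\<Sum>i\<in>{..<d} - {0}. g i)"
    using assms by (intro sum.remove) simp_all
  also have "(\<Sum>i\<in>{..<d} - {0}. g i) = 0"
    using assms by (intro sum.neutral) auto
  finally show ?thesis by simp
qed

lemma align_step:
  assumes d: "2 \<le> d" and x: "vnorm d x = 1"
  shows "\<exists>T. mp d T \<and> ipp d T \<and> T x 0 \<ge> 0 \<and> (\<forall>i. 1 \<le> i \<and> i < Suc k \<and> i < d \<longrightarrow> T x i = 0)"
proof (induction k)
  case 0
  show ?case
  proof (cases "x 0 \<ge> 0")
    case True
    then show ?thesis using mp_id[of d] ipp_id[of d] by (intro exI[of _ id]) (simp add: id_def)
  next
    case False
    let ?R = "rot 0 1 0 1 \<circ> rot 0 1 0 1"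
    have "mp d ?R" using d by (intro mp_comp rot_mp) auto
    moreover have "ipp d ?R" using d by (intro ipp_comp rot_ipp) auto
    moreover have "?R x 0 = - x 0" by (simp add: rot_def)
    ultimately show ?thesis using False by (intro exI[of _ ?R]) (simp add: comp_def)
  qed
next
  case (Suc k)
  then obtain T where T: "mp d T" "ipp d T" "T x 0 \<ge> 0"
    "\<And>i. 1 \<le> i \<Longrightarrow> i < Suc k \<Longrightarrow> i < d \<Longrightarrow> T x i = 0" by blast
  define y where "y = T x"
  show ?case
  proof (cases "Suc k \<ge> d \<or> y (Suc k) = 0")
    case True
    then show ?thesis using T unfolding y_def
      by (intro exI[of _ T]) (auto simp: less_Suc_eq)
  next
    case False
    then have kd: "Suc k < d" and yk: "y (Suc k) \<noteq> 0" by auto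
    define r where "r = sqrt (y 0 ^ 2 + y (Suc k) ^ 2)"
    have r2: "r ^ 2 = y 0 ^ 2 + y (Suc k) ^ 2" unfolding r_def by simp
    have rpos: "r > 0" unfolding r_def using yk by (simp add: add_nonneg_pos)
    define c where "c = y 0 / r"
    define s where "s = y (Suc k) / r"
    have "c^2 + s^2 = (y 0 ^ 2 + y (Suc k) ^ 2) / r^2"
      by (simp add: c_def s_def power_divide add_divide_distrib)
    then have cs: "c^2 + s^2 = 1" using r2 rpos yk by simp
    have s0: "s \<noteq> 0" using yk rpos by (simp add: s_def)
    define T' where "T' = rot 0 (Suc k) c s \<circ> T"
    have m: "mp d T'" unfolding T'_def using kd s0 cs T by (intro mp_comp rot_mp) auto
    have ii: "ipp d T'" unfolding T'_def using kd cs T by (intro ipp_comp rot_ipp) auto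
    have t0: "T' x 0 = r"
    proof -
      have "T' x 0 = c * y 0 + s * y (Suc k)" by (simp add: T'_def rot_def y_def)
      also have "\<dots> = (y 0 ^ 2 + y (Suc k) ^ 2) / r" by (simp add: c_def s_def power2_eq_square add_divide_distrib)
      also have "\<dots> = r ^ 2 / r" using r2 by simp
      also have "\<dots> = r" using rpos by (simp add: power2_eq_square)
      finally show ?thesis .
    qed
    have tk: "T' x (Suc k) = 0"
      by (simp add: T'_def rot_def y_def c_def s_def algebra_simps)
    have ti: "\<And>i. 1 \<le> i \<Longrightarrow> i < Suc k \<Longrightarrow> T' x i = T x i"
      by (simp add: T'_def rot_def)
    have "\<forall>i. 1 \<le> i \<and> i < Suc (Suc k) \<and> i < d \<longrightarrow> T' x i = 0"
    proof (intro allI impI)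
      fix i assume i: "1 \<le> i \<and> i < Suc (Suc k) \<and> i < d"
      show "T' x i = 0"
      proof (cases "i = Suc k")
        case True then show ?thesis using tk by simp
      next
        case False then show ?thesis using i ti T(4) by auto
      qed
    qed
    then show ?thesis using m ii t0 rpos by (intro exI[of _ T']) auto
  qed
qed

lemma vnorm_1_ip: "vnorm d x = 1 \<Longrightarrow> ip d x x = 1"
  unfolding vnorm_def by simp

lemma align:
  assumes d: "2 \<le> d" and x: "vnorm d x = 1"
  shows "\<exists>T. mp d T \<and> ipp d T \<and> (\<forall>w. ip d (T x) w = w 0)"
proof -
  obtain T where T: "mp d T" "ipp d T" "T x 0 \<ge> 0"
    "\<And>i. 1 \<le> i \<Longrightarrow> i < Suc (d - 1) \<Longrightarrow> i < d \<Longrightarrow> T x i = 0"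
    using align_step[OF d x, of "d - 1"] by blast
  have z: "\<And>i. 0 < i \<Longrightarrow> i < d \<Longrightarrow> T x i = 0" using T(4) d by auto
  have "ip d (T x) (T x) = 1" using T(2) vnorm_1_ip[OF x] by (simp add: ipp_def)
  moreover have "ip d (T x) (T x) = T x 0 * T x 0"
    unfolding ip_def using d z by (intro sum_single0) auto
  ultimately have "T x 0 * T x 0 = 1" by simp
  then have t1: "T x 0 = 1" using T(3)
    by (metis abs_of_nonneg mult_1_right real_sqrt_abs real_sqrt_mult_self power2_eq_square real_sqrt_one)
  have "\<forall>w. ip d (T x) w = w 0"
  proof
    fix w
    show "ip d (T x) w = w 0"
      unfolding ip_def using d z t1 by (subst sum_single0) auto
  qed
  then show ?thesis using T by blast
qed




lemma comp_meas_L: "i \<in> I \<Longrightarrow> (\<lambda>x. x i) \<in> borel_measurable (PiM I (\<lambda>_. lborel :: real measure))"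
  using measurable_component_singleton[of i I "\<lambda>_. lborel :: real measure"] by simp

lemma ip_meas_L[measurable]: "(\<lambda>z. ip d x z) \<in> borel_measurable (LL d)"
  unfolding ip_def by (intro borel_measurable_sum borel_measurable_times borel_measurable_const comp_meas_L) auto

lemma ip_meas2_L[measurable]: "(\<lambda>z. ip d z z) \<in> borel_measurable (LL d)"
  unfolding ip_def by (intro borel_measurable_sum borel_measurable_times borel_measurable_const comp_meas_L) auto

lemma vnorm_meas_L[measurable]: "(\<lambda>z. vnorm d z) \<in> borel_measurable (LL d)"
  unfolding vnorm_def using measurable_compose[OF ip_meas2_L borel_measurable_sqrt] by simp

lemma space_LL: "space (LL d) = PiE {..<d} (\<lambda>_. UNIV)"
  by (simp add: space_PiM)

lemma unit_ball_eq: "unit_ball d = {x \<in> space (LL d). vnorm d x \<le> 1}"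
  by (simp add: unit_ball_def space_LL)

lemma test1: "(\<lambda>x. vnorm d x + 1) \<in> borel_measurable (LL d)"
  by measurable

lemma unit_ball_sets[measurable]: "unit_ball d \<in> sets (LL d)"
  unfolding unit_ball_eq by measurable

lemma radial_meas: "radial d \<in> measurable (LL d) (PiM {..<d} (\<lambda>_. borel))"
  unfolding radial_def
  by (intro measurable_restrict borel_measurable_divide vnorm_meas_L comp_meas_L) auto

lemma vnorm_le1_iff: "vnorm d x \<le> 1 \<longleftrightarrow> ip d x x \<le> 1"
  by (simp add: vnorm_def)

lemma ip_self_nonneg: "ip d x x \<ge> 0"
  unfolding ip_def by (intro sum_nonneg) simp

lemma ball_fin: "emeasure (LL d) (unit_ball d) < \<infinity>"
proof -
  interpret P: product_sigma_finite "\<lambda>_. lborel :: real measure" by standard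
  have sub: "unit_ball d \<subseteq> PiE {..<d} (\<lambda>_. {-1..1})"
  proof
    fix x assume x: "x \<in> unit_ball d"
    then have xs: "x \<in> PiE {..<d} (\<lambda>_. UNIV)" and n: "ip d x x \<le> 1"
      by (auto simp: unit_ball_def vnorm_le1_iff)
    have "\<bar>x i\<bar> \<le> 1" if i: "i < d" for i
    proof -
      have "x i * x i \<le> (\<Sum>j<d. x j * x j)"
        using i by (intro member_le_sum) auto
      then have "x i * x i \<le> 1" using n by (simp add: ip_def)
      then show ?thesis by (metis abs_le_square_iff abs_one mult_1_right power2_eq_square)
    qed
    then show "x \<in> PiE {..<d} (\<lambda>_. {-1..1})" using xs by (auto simp: PiE_def Pi_def abs_le_iff)
  qed
  have "emeasure (LL d) (unit_ball d) \<le> emeasure (LL d) (PiE {..<d} (\<lambda>_. {-1..1}))"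
    by (intro emeasure_mono sub) (auto intro!: sets_PiM_I_finite)
  also have "\<dots> = (\<Prod>i<d. emeasure lborel {-1..(1::real)})"
    by (intro P.emeasure_PiM) auto
  also have "\<dots> = ennreal (2 ^ d)" using ennreal_power[of 2 d] by simp
  also have "\<dots> < \<infinity>" by simp
  finally show ?thesis .
qed

lemma ball_pos:
  assumes "d \<ge> 1"
  shows "emeasure (LL d) (unit_ball d) > 0"
proof -
  interpret P: product_sigma_finite "\<lambda>_. lborel :: real measure" by standard
  have sub: "PiE {..<d} (\<lambda>_. {-1/d..1/d}) \<subseteq> unit_ball d"
  proof
    fix x assume x: "x \<in> PiE {..<d} (\<lambda>_. {-1/real d..1/d})"
    have "x i * x i \<le> 1 / real d * (1 / real d)" if "i < d" for i
    proof -
      have "\<bar>x i\<bar> \<le> 1 / d" using x that by (auto simp: PiE_def Pi_def abs_le_iff)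
      then have "\<bar>x i\<bar> * \<bar>x i\<bar> \<le> 1 / real d * (1 / real d)" by (intro mult_mono) auto
      then show ?thesis by (simp add: abs_mult[symmetric])
    qed
    then have "ip d x x \<le> (\<Sum>i<d. 1 / real d * (1 / real d))" unfolding ip_def
      by (intro sum_mono) auto
    also have "\<dots> = 1 / real d" using assms by simp
    also have "\<dots> \<le> 1" using assms by simp
    finally show "x \<in> unit_ball d" using x by (auto simp: unit_ball_def vnorm_le1_iff PiE_def)
  qed
  have "(0::ennreal) < (\<Prod>i<d. emeasure lborel {-1/real d..1/d})"
    using assms by (simp add: ennreal_power)
  also have "\<dots> = emeasure (LL d) (PiE {..<d} (\<lambda>_. {-1/real d..1/d}))"
    by (intro P.emeasure_PiM[symmetric]) auto
  also have "\<dots> \<le> emeasure (LL d) (unit_ball d)"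
    by (intro emeasure_mono sub) simp
  finally show ?thesis .
qed

abbreviation UU :: "nat \<Rightarrow> (nat \<Rightarrow> real) measure" where
  "UU d \<equiv> uniform_measure (LL d) (unit_ball d)"

lemma sets_PB: "sets (PiM {..<d} (\<lambda>_. borel :: real measure)) = sets (LL d)"
  by (intro sets_PiM_cong) auto

lemma sets_UU: "sets (UU d) = sets (LL d)"
  by simp

lemma space_UU: "space (UU d) = space (LL d)"
  by simp

lemma radial_meas_U: "radial d \<in> measurable (UU d) (PiM {..<d} (\<lambda>_. borel))"
  using radial_meas by (simp add: measurable_cong_sets[OF sets_UU refl])

lemma sets_unif: "sets (unif_sphere d) = sets (LL d)"
  unfolding unif_sphere_def using sets_PB by simp

lemma space_unif: "space (unif_sphere d) = space (LL d)"
  unfolding unif_sphere_def by (simp add: space_PiM)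

lemma radial_space: "radial d z \<in> space (LL d)"
  by (simp add: radial_def space_LL)

lemma prob_unif: "d \<ge> 1 \<Longrightarrow> prob_space (unif_sphere d)"
  unfolding unif_sphere_def
  by (intro prob_space.prob_space_distr prob_space_uniform_measure radial_meas_U)
     (use ball_pos[of d] ball_fin[of d] in auto)

lemma emeasure_unif:
  assumes P: "{w \<in> space (LL d). P w} \<in> sets (LL d)"
  shows "emeasure (unif_sphere d) {w \<in> space (unif_sphere d). P w} =
    emeasure (LL d) {z \<in> space (LL d). vnorm d z \<le> 1 \<and> P (radial d z)} / emeasure (LL d) (unit_ball d)"
proof -
  have A: "{w \<in> space (unif_sphere d). P w} \<in> sets (PiM {..<d} (\<lambda>_. borel))"
    using P by (simp add: space_unif sets_PB)
  have B: "radial d -` {w \<in> space (unif_sphere d). P w} \<inter> space (UU d) \<in> sets (LL d)"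
    using measurable_sets[OF radial_meas A] by simp
  have "emeasure (unif_sphere d) {w \<in> space (unif_sphere d). P w} =
     emeasure (UU d) (radial d -` {w \<in> space (unif_sphere d). P w} \<inter> space (UU d))"
  proof -
    have eq: "unif_sphere d = distr (UU d) (PiM {..<d} (\<lambda>_. borel)) (radial d)"
      by (simp add: unif_sphere_def)
    show ?thesis by (subst (1) eq) (rule emeasure_distr[OF radial_meas_U A])
  qed
  also have "\<dots> = emeasure (LL d) (unit_ball d \<inter> (radial d -` {w \<in> space (unif_sphere d). P w} \<inter> space (UU d))) / emeasure (LL d) (unit_ball d)"
    using B by (intro emeasure_uniform_measure) auto
  also have "unit_ball d \<inter> (radial d -` {w \<in> space (unif_sphere d). P w} \<inter> space (UU d)) =
      {z \<in> space (LL d). vnorm d z \<le> 1 \<and> P (radial d z)}"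
    using radial_space[of d] by (auto simp: unit_ball_eq space_unif)
  finally show ?thesis .
qed

lemma null_cone:
  assumes d: "d \<ge> 1" and a: "0 \<le> \<alpha>" "\<alpha> < 1"
  shows "{z \<in> space (LL d). z 0 = \<alpha> * vnorm d z} \<in> sets (LL d)"
    and "emeasure (LL d) {z \<in> space (LL d). z 0 = \<alpha> * vnorm d z} = 0"
proof -
  interpret P: product_sigma_finite "\<lambda>_. lborel :: real measure" by standard
  have c0[measurable]: "(\<lambda>z. z 0) \<in> borel_measurable (LL d)" using d by (intro comp_meas_L) auto
  define N where "N = {z \<in> space (LL d). z 0 = \<alpha> * vnorm d z}"
  show Nm: "{z \<in> space (LL d). z 0 = \<alpha> * vnorm d z} \<in> sets (LL d)" by measurable
  define I where "I = {..<d} - {0}"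
  have ins: "{..<d} = insert 0 I" "0 \<notin> I" "finite I" using d by (auto simp: I_def)
  have ind: "indicator N \<in> borel_measurable (PiM (insert 0 I) (\<lambda>_. lborel :: real measure))"
  proof -
    have "N \<in> sets (LL d)" using Nm by (simp add: N_def)
    then show ?thesis using borel_measurable_indicator[of N "LL d"] ins(1) by simp
  qed
  have "emeasure (LL d) N = (\<integral>\<^sup>+z. indicator N z \<partial>LL d)"
    using Nm by (simp add: N_def)
  also have "\<dots> = (\<integral>\<^sup>+ x. (\<integral>\<^sup>+ y. indicator N (x(0 := y)) \<partial>lborel) \<partial>(PiM I (\<lambda>_. lborel::real measure)))"
    unfolding ins(1) by (rule P.product_nn_integral_insert[OF ins(3,2) ind])
  also have "\<dots> = (\<integral>\<^sup>+ x. 0 \<partial>(PiM I (\<lambda>_. lborel::real measure)))"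
  proof (rule nn_integral_cong)
    fix x assume x: "x \<in> space (PiM I (\<lambda>_. lborel::real measure))"
    define R where "R = (\<Sum>i\<in>I. x i * x i)"
    define y0 where "y0 = sqrt (\<alpha>^2 * R / (1 - \<alpha>^2))"
    have "indicator N (x(0 := y)) \<le> (indicator {y0} y :: ennreal)" for y
    proof (cases "x(0 := y) \<in> N")
      case True
      have "ip d (x(0 := y)) (x(0 := y)) = y * y + (\<Sum>i\<in>I. (x(0 := y)) i * (x(0 := y)) i)"
        unfolding ip_def ins(1) using ins by (subst sum.insert) auto
      also have "(\<Sum>i\<in>I. (x(0 := y)) i * (x(0 := y)) i) = R"
        unfolding R_def using ins by (intro sum.cong) auto
      finally have ipe: "ip d (x(0 := y)) (x(0 := y)) = y * y + R" .
      have R0: "R \<ge> 0" unfolding R_def by (intro sum_nonneg) auto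
      from True have e: "y = \<alpha> * sqrt (y * y + R)" by (simp add: N_def vnorm_def ipe)
      then have y0': "y \<ge> 0" using a by (metis mult_nonneg_nonneg real_sqrt_ge_zero add_nonneg_nonneg R0 zero_le_square)
      have "y * y = \<alpha>^2 * (y * y + R)"
        using e R0 by (metis add_nonneg_nonneg mult_nonneg_nonneg power2_eq_square power_mult_distrib real_sqrt_pow2 zero_le_square)
      moreover have "\<alpha>^2 * (y * y + R) = \<alpha>^2 * (y * y) + \<alpha>^2 * R" by (simp add: algebra_simps)
      moreover have "y * y * (1 - \<alpha>^2) = y * y - \<alpha>^2 * (y * y)" by (simp add: algebra_simps)
      ultimately have "y * y * (1 - \<alpha>^2) = \<alpha>^2 * R" by linarith
      moreover have nz: "1 - \<alpha>^2 > 0"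
      proof -
        have "\<alpha> * \<alpha> \<le> \<alpha> * 1" using a by (intro mult_left_mono) auto
        then show ?thesis using a by (simp add: power2_eq_square)
      qed
      ultimately have "y * y = \<alpha>^2 * R / (1 - \<alpha>^2)"
        by (simp add: eq_divide_eq)
      then have "y = y0" unfolding y0_def using y0'
        by (metis real_sqrt_abs real_sqrt_mult abs_of_nonneg real_sqrt_mult_self)
      then show ?thesis by (simp add: indicator_def)
    qed (simp)
    then have "(\<integral>\<^sup>+ y. indicator N (x(0 := y)) \<partial>lborel) \<le> (\<integral>\<^sup>+ y. indicator {y0} y \<partial>lborel)"
      by (intro nn_integral_mono) auto
    also have "\<dots> = 0" by simp
    finally show "(\<integral>\<^sup>+ y. indicator N (x(0 := y)) \<partial>lborel) = 0" by simp
  qed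
  also have "\<dots> = 0" by simp
  finally show "emeasure (LL d) {z \<in> space (LL d). z 0 = \<alpha> * vnorm d z} = 0" by (simp add: N_def)
qed

lemma ip_radial: "ip d x (radial d z) = ip d x z / vnorm d z"
  unfolding ip_def radial_def by (simp add: sum_divide_distrib)

lemma mp_set:
  assumes T: "mp d T" and S: "{w \<in> space (LL d). Q w} \<in> sets (LL d)"
  shows "emeasure (LL d) {z \<in> space (LL d). Q (T z)} = emeasure (LL d) {w \<in> space (LL d). Q w}"
proof -
  let ?S = "{w \<in> space (LL d). Q w}"
  have Tm: "T \<in> measurable (LL d) (LL d)" and Ti: "\<And>f. f \<in> borel_measurable (LL d) \<Longrightarrow> (\<integral>\<^sup>+x. f (T x) \<partial>LL d) = (\<integral>\<^sup>+x. f x \<partial>LL d)"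
    using T by (auto simp: mp_def)
  have e: "{z \<in> space (LL d). Q (T z)} = T -` ?S \<inter> space (LL d)"
    using measurable_space[OF Tm] by auto
  have Sm: "T -` ?S \<inter> space (LL d) \<in> sets (LL d)" using measurable_sets[OF Tm S] .
  have "emeasure (LL d) {z \<in> space (LL d). Q (T z)} = (\<integral>\<^sup>+z. indicator (T -` ?S \<inter> space (LL d)) z \<partial>LL d)"
    using Sm e by simp
  also have "\<dots> = (\<integral>\<^sup>+z. indicator ?S (T z) \<partial>LL d)"
    by (intro nn_integral_cong) (auto simp: indicator_def)
  also have "\<dots> = (\<integral>\<^sup>+z. indicator ?S z \<partial>LL d)"
    using S by (intro Ti) simp
  also have "\<dots> = emeasure (LL d) ?S" using S by simp
  finally show ?thesis .
qed

lemma p_le_cap: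
  assumes d: "d \<ge> 2" and a: "0 < \<alpha>" "\<alpha> < 1" and x: "vnorm d x = 1"
  shows "emeasure (unif_sphere d) {w \<in> space (unif_sphere d). \<alpha> \<le> ip d x w} \<le> ennreal (cap d \<alpha>)"
proof -
  have c0[measurable]: "(\<lambda>z. z 0) \<in> borel_measurable (LL d)" using d by (intro comp_meas_L) auto
  obtain T where T: "mp d T" "ipp d T" "\<And>w. ip d (T x) w = w 0" using align[OF d x] by blast
  let ?V = "emeasure (LL d) (unit_ball d)"
  define Qg where "Qg = (\<lambda>w. vnorm d w \<le> 1 \<and> \<alpha> \<le> w 0 / vnorm d w)"
  define Ql where "Ql = (\<lambda>w. vnorm d w \<le> 1 \<and> \<alpha> < w 0 / vnorm d w)"
  have Qgm: "{w \<in> space (LL d). Qg w} \<in> sets (LL d)" unfolding Qg_def by measurable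
  have Qlm: "{w \<in> space (LL d). Ql w} \<in> sets (LL d)" unfolding Ql_def by measurable
  have vT: "vnorm d (T z) = vnorm d z" for z using T(2) by (simp add: vnorm_def ipp_def)
  have E1: "emeasure (unif_sphere d) {w \<in> space (unif_sphere d). \<alpha> \<le> ip d x w} =
    emeasure (LL d) {z \<in> space (LL d). vnorm d z \<le> 1 \<and> \<alpha> \<le> ip d x (radial d z)} / ?V"
    by (rule emeasure_unif) measurable
  have E2: "{z \<in> space (LL d). vnorm d z \<le> 1 \<and> \<alpha> \<le> ip d x (radial d z)} = {z \<in> space (LL d). Qg (T z)}"
  proof -
    have "ip d x (radial d z) = T z 0 / vnorm d (T z)" for z
      unfolding ip_radial vT using T(2) T(3)[of "T z"] by (simp add: ipp_def)
    then show ?thesis unfolding Qg_def vT by auto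
  qed
  have E3: "emeasure (LL d) {z \<in> space (LL d). Qg (T z)} = emeasure (LL d) {w \<in> space (LL d). Qg w}"
    by (rule mp_set[OF T(1) Qgm])
  have E4: "emeasure (LL d) {w \<in> space (LL d). Qg w} \<le> emeasure (LL d) {w \<in> space (LL d). Ql w}"
  proof -
    let ?N = "{z \<in> space (LL d). z 0 = \<alpha> * vnorm d z}"
    have "{w \<in> space (LL d). Qg w} \<subseteq> {w \<in> space (LL d). Ql w} \<union> ?N"
    proof
      fix w assume w: "w \<in> {w \<in> space (LL d). Qg w}"
      show "w \<in> {w \<in> space (LL d). Ql w} \<union> ?N"
      proof (cases "vnorm d w = 0")
        case True then show ?thesis using w a by (simp add: Qg_def)
      next
        case False
        have "vnorm d w \<ge> 0" using ip_self_nonneg[of d w] by (simp add: vnorm_def)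
        with False have vp: "vnorm d w > 0" by simp
        show ?thesis using w vp by (auto simp: Qg_def Ql_def field_simps)
      qed
    qed
    then have "emeasure (LL d) {w \<in> space (LL d). Qg w} \<le> emeasure (LL d) ({w \<in> space (LL d). Ql w} \<union> ?N)"
      using Qlm null_cone(1)[of d \<alpha>] d a by (intro emeasure_mono) auto
    also have "\<dots> \<le> emeasure (LL d) {w \<in> space (LL d). Ql w} + emeasure (LL d) ?N"
      using Qlm null_cone(1)[of d \<alpha>] d a by (intro emeasure_subadditive) auto
    also have "emeasure (LL d) ?N = 0" using null_cone(2)[of d \<alpha>] d a by auto
    finally show ?thesis by simp
  qed
  have "emeasure (unif_sphere d) {w \<in> space (unif_sphere d). \<alpha> \<le> ip d x w}
      \<le> emeasure (LL d) {w \<in> space (LL d). Ql w} / ?V"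
    unfolding E1 E2 E3 by (intro divide_right_mono_ennreal E4)
  also have "emeasure (LL d) {w \<in> space (LL d). Ql w} / ?V = emeasure (unif_sphere d) {w \<in> space (unif_sphere d). w 0 > \<alpha>}"
  proof -
    have r0: "radial d z 0 = z 0 / vnorm d z" for z using d by (simp add: radial_def)
    have "emeasure (unif_sphere d) {w \<in> space (unif_sphere d). w 0 > \<alpha>} =
       emeasure (LL d) {z \<in> space (LL d). vnorm d z \<le> 1 \<and> radial d z 0 > \<alpha>} / ?V"
      by (rule emeasure_unif) measurable
    then show ?thesis by (simp add: r0 Ql_def)
  qed
  also have "\<dots> = ennreal (cap d \<alpha>)"
  proof -
    interpret prob_space "unif_sphere d" using prob_unif[of d] d by simp
    show ?thesis unfolding cap_def by (simp add: emeasure_eq_measure)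
  qed
  finally show ?thesis .
qed




lemma comp_meas_M: "k < d \<Longrightarrow> (\<lambda>w. w k) \<in> borel_measurable (unif_sphere d)"
  by (subst measurable_cong_sets[OF sets_unif refl]) (rule comp_meas_L, simp)

lemma ip_meas_M: "(\<lambda>w. ip d y w) \<in> borel_measurable (unif_sphere d)"
  by (subst measurable_cong_sets[OF sets_unif refl]) (rule ip_meas_L)

lemma ae_unit:
  assumes d: "d \<ge> 2" shows "AE w in unif_sphere d. vnorm d w = 1"
proof -
  let ?N = "{z \<in> space (LL d). z 0 = 0 * vnorm d z}"
  have Nm: "?N \<in> sets (LL d)" and N0: "emeasure (LL d) ?N = 0" using null_cone[of d 0] d by auto
  have "emeasure (UU d) ?N = emeasure (LL d) (unit_ball d \<inter> ?N) / emeasure (LL d) (unit_ball d)"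
    using Nm by (intro emeasure_uniform_measure) auto
  also have "emeasure (LL d) (unit_ball d \<inter> ?N) = 0"
  proof -
    have "emeasure (LL d) (unit_ball d \<inter> ?N) \<le> emeasure (LL d) ?N"
      using Nm by (intro emeasure_mono) auto
    then show ?thesis using N0 by simp
  qed
  finally have "emeasure (UU d) ?N = 0" by simp
  then have "?N \<in> null_sets (UU d)" using Nm by (simp add: null_sets_def)
  then have ae1: "AE z in UU d. z \<notin> ?N" by (rule AE_I') auto
  have ae2: "AE z in UU d. vnorm d (radial d z) = 1"
  proof (rule eventually_mono[OF eventually_conj[OF AE_space ae1]])
    fix z assume "z \<in> space (UU d) \<and> z \<notin> ?N"
    then have z: "z \<notin> ?N" and zs: "z \<in> space (UU d)" by auto
    from z zs have z0: "z 0 \<noteq> 0" by auto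
    have "ip d z z \<noteq> 0"
    proof
      assume "ip d z z = 0"
      moreover have "z 0 * z 0 \<le> ip d z z" unfolding ip_def using d by (intro member_le_sum) auto
      moreover have "z 0 * z 0 > 0" using z0 by (auto simp: zero_less_mult_iff linorder_neq_iff)
      ultimately show False by simp
    qed
    then have ipp: "ip d z z > 0" using ip_self_nonneg[of d z] by simp
    have "ip d (radial d z) (radial d z) = ip d z z / (vnorm d z * vnorm d z)"
      unfolding ip_def radial_def by (simp add: sum_divide_distrib)
    also have "vnorm d z * vnorm d z = ip d z z" unfolding vnorm_def using ipp by simp
    finally show "vnorm d (radial d z) = 1" using ipp by (simp add: vnorm_def)
  qed
  have S: "{x \<in> space (PiM {..<d} (\<lambda>_. borel)). vnorm d x = 1} \<in> sets (PiM {..<d} (\<lambda>_. borel))"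
  proof -
    have "{x \<in> space (LL d). vnorm d x = 1} \<in> sets (LL d)" by measurable
    then show ?thesis using sets_PB[of d] by (simp add: space_PiM)
  qed
  show ?thesis unfolding unif_sphere_def
    using AE_distr_iff[OF radial_meas_U S] ae2 by simp
qed

lemma ip_meas_D:
  assumes "i < n" "j < n"
  shows "(\<lambda>D. ip d (D i) (D j)) \<in> borel_measurable (PiM {..<n} (\<lambda>_. unif_sphere d))"
  unfolding ip_def
proof (intro borel_measurable_sum borel_measurable_times)
  fix k assume k: "k \<in> {..<d}"
  have "(\<lambda>D. D i k) \<in> borel_measurable (PiM {..<n} (\<lambda>_. unif_sphere d))"
    if "i < n" for i
    using measurable_comp[OF measurable_component_singleton[of i "{..<n}" "\<lambda>_. unif_sphere d"] comp_meas_M[of k d]] that k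
    by (simp add: comp_def)
  then show "(\<lambda>D. D i k) \<in> borel_measurable (PiM {..<n} (\<lambda>_. unif_sphere d))"
    "(\<lambda>D. D j k) \<in> borel_measurable (PiM {..<n} (\<lambda>_. unif_sphere d))" using assms by auto
qed

lemma prod_if_2:
  fixes J :: "nat set"
  assumes "finite J"
  shows "(\<Prod>j\<in>J. (if P j then 2 else 1 :: ennreal)) = ennreal (2 ^ card {j \<in> J. P j})"
proof -
  have "(\<Prod>j\<in>J. (if P j then 2 else 1 :: ennreal)) = (\<Prod>j\<in>J \<inter> {x. P x}. 2) * (\<Prod>j\<in>J \<inter> - {x. P x}. 1)"
    using assms by (rule prod.If_cases)
  also have "\<dots> = 2 ^ card (J \<inter> {x. P x})" by simp
  also have "J \<inter> {x. P x} = {j \<in> J. P j}" by auto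
  finally show ?thesis using ennreal_power[of 2] by simp
qed

lemma nbrs_eq: "nbrs d n \<alpha> D i = {j \<in> {..<n} - {i}. \<alpha> \<le> ip d (D i) (D j)}"
  by (auto simp: nbrs_def)

lemma card_nbrs_meas:
  assumes i: "i < n"
  shows "(\<lambda>D. real (card (nbrs d n \<alpha> D i))) \<in> borel_measurable (PiM {..<n} (\<lambda>_. unif_sphere d))"
proof -
  have e: "real (card (nbrs d n \<alpha> D i)) = (\<Sum>j\<in>{..<n} - {i}. of_bool (\<alpha> \<le> ip d (D i) (D j)))" for D
    by (subst sum_of_bool_eq) (auto simp: nbrs_eq intro!: arg_cong[where f=card])
  show ?thesis unfolding e
  proof (intro borel_measurable_sum)
    fix j assume j: "j \<in> {..<n} - {i}"
    have [measurable]: "(\<lambda>D. ip d (D i) (D j)) \<in> borel_measurable (PiM {..<n} (\<lambda>_. unif_sphere d))"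
      using ip_meas_D[of i n j d] i j by auto
    show "(\<lambda>D. of_bool (\<alpha> \<le> ip d (D i) (D j)) :: real) \<in> borel_measurable (PiM {..<n} (\<lambda>_. unif_sphere d))"
      by measurable
  qed
qed

lemma chernoff:
  assumes d: "d \<ge> 2" and a: "0 < \<alpha>" "\<alpha> < 1" and i: "i < n"
  shows "emeasure (data_measure d n) {D \<in> space (data_measure d n). t \<le> real (card (nbrs d n \<alpha> D i))}
     \<le> ennreal (2 powr (-t) * exp (real n * cap d \<alpha>))"
proof -
  define M where "M = unif_sphere d"
  interpret Mp: prob_space M using prob_unif[of d] d by (simp add: M_def)
  interpret P: product_sigma_finite "\<lambda>_. M"
    by (simp add: product_sigma_finite_def Mp.sigma_finite_measure_axioms)
  define J where "J = {..<n} - {i}"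
  have ins: "{..<n} = insert i J" "i \<notin> J" "finite J" using i by (auto simp: J_def)
  have cJ: "card J = n - 1" using i by (simp add: J_def)
  define h where "h = (\<lambda>y w. if \<alpha> \<le> ip d y w then 2 else 1 :: ennreal)"
  define F where "F = (\<lambda>D. \<Prod>j\<in>J. h (D i) (D j))"
  define cap' where "cap' = cap d \<alpha>"
  have cap0: "cap' \<ge> 0" unfolding cap'_def cap_def by simp
  have hm: "h y \<in> borel_measurable M" for y
  proof -
    have [measurable]: "(\<lambda>w. ip d y w) \<in> borel_measurable M" using ip_meas_M by (simp add: M_def)
    show ?thesis unfolding h_def by measurable
  qed
  have Fm: "F \<in> borel_measurable (PiM {..<n} (\<lambda>_. M))"
    unfolding F_def
  proof (intro borel_measurable_prod_ennreal)
    fix j assume j: "j \<in> J"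
    have [measurable]: "(\<lambda>D. ip d (D i) (D j)) \<in> borel_measurable (PiM {..<n} (\<lambda>_. M))"
      using ip_meas_D[of i n j d] i j by (auto simp: J_def M_def)
    show "(\<lambda>D. h (D i) (D j)) \<in> borel_measurable (PiM {..<n} (\<lambda>_. M))"
      unfolding h_def by measurable
  qed
  have cm: "(\<lambda>D. real (card (nbrs d n \<alpha> D i))) \<in> borel_measurable (PiM {..<n} (\<lambda>_. M))"
    using card_nbrs_meas[OF i] by (simp add: M_def)
  define B where "B = {D \<in> space (data_measure d n). t \<le> real (card (nbrs d n \<alpha> D i))}"
  have Bm: "B \<in> sets (PiM {..<n} (\<lambda>_. M))"
    unfolding B_def data_measure_def M_def[symmetric] using cm by measurable
  have FD: "F D = ennreal (2 ^ card (nbrs d n \<alpha> D i))" for D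
    unfolding F_def h_def by (subst prod_if_2[OF ins(3)]) (simp add: nbrs_eq J_def)
  have ind: "indicator B D \<le> ennreal (2 powr (-t)) * F D" for D
  proof (cases "D \<in> B")
    case True
    then have tc: "t \<le> real (card (nbrs d n \<alpha> D i))" by (simp add: B_def)
    have "1 \<le> 2 powr (real (card (nbrs d n \<alpha> D i)) - t)" using tc by (intro ge_one_powr_ge_zero) auto
    also have "\<dots> = 2 powr (-t) * 2 ^ card (nbrs d n \<alpha> D i)"
      by (simp add: powr_diff powr_realpow divide_inverse powr_minus)
    finally show ?thesis using True
      by (simp add: FD ennreal_mult[symmetric] ennreal_1[symmetric] del: ennreal_1)
  qed simp
  have "emeasure (data_measure d n) B = (\<integral>\<^sup>+D. indicator B D \<partial>PiM {..<n} (\<lambda>_. M))"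
    using Bm by (simp add: data_measure_def M_def)
  also have "\<dots> \<le> (\<integral>\<^sup>+D. ennreal (2 powr (-t)) * F D \<partial>PiM {..<n} (\<lambda>_. M))"
    by (intro nn_integral_mono ind)
  also have "\<dots> = ennreal (2 powr (-t)) * (\<integral>\<^sup>+D. F D \<partial>PiM {..<n} (\<lambda>_. M))"
    using Fm by (rule nn_integral_cmult)
  also have "(\<integral>\<^sup>+D. F D \<partial>PiM {..<n} (\<lambda>_. M)) = (\<integral>\<^sup>+ y. (\<integral>\<^sup>+ x. F (x(i := y)) \<partial>(PiM J (\<lambda>_. M))) \<partial>M)"
    unfolding ins(1) using Fm ins by (intro P.product_nn_integral_insert_rev) auto
  also have "\<dots> \<le> (\<integral>\<^sup>+ y. ennreal (exp (real n * cap')) \<partial>M)"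
  proof (rule nn_integral_mono_AE)
    have ae: "AE y in M. vnorm d y = 1" unfolding M_def by (rule ae_unit[OF d])
    show "AE y in M. (\<integral>\<^sup>+ x. F (x(i := y)) \<partial>(PiM J (\<lambda>_. M))) \<le> ennreal (exp (real n * cap'))"
    proof (rule eventually_mono[OF ae])
      fix y assume y: "vnorm d y = 1"
      have "(\<integral>\<^sup>+ x. F (x(i := y)) \<partial>(PiM J (\<lambda>_. M))) = (\<integral>\<^sup>+ x. (\<Prod>j\<in>J. h y (x j)) \<partial>(PiM J (\<lambda>_. M)))"
        unfolding F_def using ins(2) by (intro nn_integral_cong prod.cong) auto
      also have "\<dots> = (\<Prod>j\<in>J. integral\<^sup>N M (h y))"
        using hm ins(3) by (intro P.product_nn_integral_prod) auto
      also have "\<dots> \<le> (\<Prod>j\<in>J. ennreal (1 + cap'))"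
      proof -
        have Am: "{w \<in> space M. \<alpha> \<le> ip d y w} \<in> sets M"
        proof -
          have [measurable]: "(\<lambda>w. ip d y w) \<in> borel_measurable M" using ip_meas_M by (simp add: M_def)
          show ?thesis by measurable
        qed
        have "integral\<^sup>N M (h y) = (\<integral>\<^sup>+w. 1 + indicator {w \<in> space M. \<alpha> \<le> ip d y w} w \<partial>M)"
          by (intro nn_integral_cong) (auto simp: h_def indicator_def one_add_one)
        also have "\<dots> = 1 + emeasure M {w \<in> space M. \<alpha> \<le> ip d y w}"
          using Am by (subst nn_integral_add) (auto simp: Mp.emeasure_space_1)
        also have "\<dots> \<le> 1 + ennreal cap'"
          using p_le_cap[OF d a y] by (simp add: M_def cap'_def add_left_mono)
        also have "\<dots> = ennreal (1 + cap')" using cap0 by (simp add: ennreal_plus)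
        finally have "integral\<^sup>N M (h y) \<le> ennreal (1 + cap')" .
        then show ?thesis by (simp add: power_mono)
      qed
      also have "\<dots> = ennreal ((1 + cap') ^ (n - 1))"
      proof -
        have "ennreal (1 + cap') ^ (n - 1) = ennreal ((1 + cap') ^ (n - 1))"
          using cap0 by (intro ennreal_power) simp
        then show ?thesis by (simp add: cJ)
      qed
      also have "\<dots> \<le> ennreal (exp (real n * cap'))"
      proof (rule ennreal_leI)
        have "(1 + cap') ^ (n - 1) \<le> exp cap' ^ (n - 1)"
          using cap0 by (intro power_mono) (auto simp: exp_ge_add_one_self add.commute)
        also have "\<dots> = exp (real (n - 1) * cap')" by (simp add: exp_of_nat_mult)
        also have "\<dots> \<le> exp (real n * cap')" using cap0 by (intro exp_mono mult_right_mono) auto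
        finally show "(1 + cap') ^ (n - 1) \<le> exp (real n * cap')" .
      qed
      finally show "(\<integral>\<^sup>+ x. F (x(i := y)) \<partial>(PiM J (\<lambda>_. M))) \<le> ennreal (exp (real n * cap'))" .
    qed
  qed
  also have "(\<integral>\<^sup>+ y. ennreal (exp (real n * cap')) \<partial>M) = ennreal (exp (real n * cap'))"
    by (simp add: Mp.emeasure_space_1)
  finally have "emeasure (data_measure d n) B \<le> ennreal (2 powr (-t)) * ennreal (exp (real n * cap'))"
    by (simp add: mult_left_mono)
  then show ?thesis unfolding B_def cap'_def by (simp add: ennreal_mult)
qed




lemma ln2_half: "1/2 \<le> ln (2::real)"
proof -
  have "exp (1/2::real) * exp (1/2) = exp 1" by (simp add: exp_add[symmetric])
  also have "\<dots> \<le> 3" by (rule exp_le)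
  finally have "exp (1/2::real) * exp (1/2) < 2 * 2" by simp
  have "exp (1/2::real) < 2"
  proof (rule ccontr)
    assume "\<not> exp (1/2::real) < 2"
    then have "2 \<le> exp (1/2::real)" by simp
    then have "2 * 2 \<le> exp (1/2::real) * exp (1/2)" by (intro mult_mono) auto
    then show False using \<open>exp (1/2::real) * exp (1/2) < 2 * 2\<close> by simp
  qed
  then have "ln (exp (1/2::real)) \<le> ln 2" by (intro ln_mono) auto
  then show ?thesis by simp
qed

lemma tail_bound:
  fixes m :: real
  assumes m: "m \<ge> 0"
  shows "2 powr (- (4 * m)) * exp m \<le> exp (- m)"
proof -
  have "2 powr (- (4 * m)) * exp m = exp (m - 4 * m * ln 2)"
    by (simp add: powr_def exp_add[symmetric] mult.commute)
  also have "\<dots> \<le> exp (-m)"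
  proof (rule exp_mono)
    have "0 \<le> (4 * m) * (ln 2 - 1/2)" using ln2_half m by (intro mult_nonneg_nonneg) auto
    then have "2 * m \<le> 4 * m * ln 2" by (simp add: algebra_simps)
    then show "m - 4 * m * ln 2 \<le> - m" by simp
  qed
  finally show ?thesis .
qed

lemma main_fixed:
  assumes d: "d \<ge> 2" and n: "n \<ge> 1" and a: "0 < \<alpha>" "\<alpha> < 1"
  shows "\<exists>G \<in> sets (data_measure d n).
           measure (data_measure d n) G \<ge> 1 - real n * exp (- 1 * real n * cap d \<alpha>) \<and>
           (\<forall>D \<in> G. \<forall>ps. tour_path d n \<alpha> D q ps \<longrightarrow> length ps \<le> 2 * d + 1 \<longrightarrow>
              real (\<Sum>i<length ps. card (nbrs d n \<alpha> D (ps ! i)))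
                \<le> 10 * real d * real n * cap d \<alpha>)"
proof -
  define DM where "DM = data_measure d n"
  interpret DMp: prob_space DM unfolding DM_def data_measure_def
    using prob_unif[of d] d by (intro prob_space_PiM) auto
  define m where "m = real n * cap d \<alpha>"
  have cap0: "cap d \<alpha> \<ge> 0" unfolding cap_def by simp
  have m0: "m \<ge> 0" using cap0 by (simp add: m_def)
  define t where "t = 4 * m"
  define B where "B = (\<lambda>i. {D \<in> space DM. t \<le> real (card (nbrs d n \<alpha> D i))})"
  have Bm: "B i \<in> sets DM" if "i < n" for i
  proof -
    have [measurable]: "(\<lambda>D. real (card (nbrs d n \<alpha> D i))) \<in> borel_measurable DM"
      using card_nbrs_meas[OF that] by (simp add: DM_def data_measure_def)
    show ?thesis unfolding B_def by measurable
  qed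
  have Bp: "measure DM (B i) \<le> exp (- m)" if i: "i < n" for i
  proof -
    have "emeasure DM (B i) \<le> ennreal (2 powr (-t) * exp (real n * cap d \<alpha>))"
      unfolding B_def DM_def by (rule chernoff[OF d a i])
    also have "\<dots> \<le> ennreal (exp (- m))"
      using tail_bound[OF m0] by (intro ennreal_leI) (simp add: t_def m_def)
    finally show ?thesis using DMp.emeasure_eq_measure by (simp add: ennreal_le_iff)
  qed
  define G where "G = space DM - (\<Union>i<n. B i)"
  have Um: "(\<Union>i<n. B i) \<in> sets DM" using Bm by auto
  have Gm: "G \<in> sets DM" unfolding G_def using Um by auto
  have "measure DM (\<Union>i<n. B i) \<le> (\<Sum>i<n. measure DM (B i))"
    using Bm by (intro DMp.finite_measure_subadditive_finite) auto
  also have "\<dots> \<le> (\<Sum>i<n. exp (- m))" using Bp by (intro sum_mono) auto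
  also have "\<dots> = real n * exp (- m)" by simp
  finally have U: "measure DM (\<Union>i<n. B i) \<le> real n * exp (- m)" .
  have "measure DM G = 1 - measure DM (\<Union>i<n. B i)"
    unfolding G_def using Um by (simp add: DMp.prob_compl)
  then have Gp: "measure DM G \<ge> 1 - real n * exp (- 1 * real n * cap d \<alpha>)"
    using U by (simp add: m_def)
  have Gb: "real (\<Sum>i<length ps. card (nbrs d n \<alpha> D (ps ! i))) \<le> 10 * real d * real n * cap d \<alpha>"
    if D: "D \<in> G" and tp: "tour_path d n \<alpha> D q ps" and len: "length ps \<le> 2 * d + 1" for D ps
  proof -
    have each: "real (card (nbrs d n \<alpha> D (ps ! i))) \<le> t" if "i < length ps" for i
    proof -
      have "ps ! i < n" using tp that by (auto simp: tour_path_def)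
      then have "D \<notin> B (ps ! i)" using D by (auto simp: G_def)
      moreover have "D \<in> space DM" using D by (simp add: G_def)
      ultimately show ?thesis by (auto simp: B_def)
    qed
    have "real (\<Sum>i<length ps. card (nbrs d n \<alpha> D (ps ! i))) = (\<Sum>i<length ps. real (card (nbrs d n \<alpha> D (ps ! i))))"
      by simp
    also have "\<dots> \<le> real (card {..<length ps}) * t"
      using each by (intro sum_bounded_above) auto
    also have "\<dots> \<le> real (2 * d + 1) * t"
      using len m0 by (intro mult_right_mono) (auto simp: t_def)
    also have "\<dots> = (8 * real d + 4) * m" by (simp add: t_def algebra_simps)
    also have "\<dots> \<le> (10 * real d) * m" using d m0 by (intro mult_right_mono) auto
    also have "\<dots> = 10 * real d * real n * cap d \<alpha>" by (simp add: m_def)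
    finally show ?thesis .
  qed
  show ?thesis using Gm Gp Gb unfolding DM_def by blast
qed

theorem lemma17:
  "\<exists>K c. K > 0 \<and> c > 0 \<and>
     (\<forall>d n \<alpha> q. d \<ge> 2 \<longrightarrow> n \<ge> 1 \<longrightarrow> 0 < \<alpha> \<longrightarrow> \<alpha> < 1 \<longrightarrow> q \<in> unit_sphere d \<longrightarrow>
        (\<exists>G \<in> sets (data_measure d n).
           measure (data_measure d n) G \<ge> 1 - real n * exp (- c * real n * cap d \<alpha>) \<and>
           (\<forall>D \<in> G. \<forall>ps. tour_path d n \<alpha> D q ps \<longrightarrow> length ps \<le> 2 * d + 1 \<longrightarrow>
              real (\<Sum>i<length ps. card (nbrs d n \<alpha> D (ps ! i)))
                \<le> K * real d * real n * cap d \<alpha>)))"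
  apply (rule exI[of _ "10::real"], rule exI[of _ "1::real"])
  using main_fixed by auto


end
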